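(* Let $b\in[0,1]$ with $b\neq\frac12$, and define $f_b:[0,1]\to[0,1]$ by $$f_b(x)=\begin{cases} x, & x\in[0,\frac13]\cup[\frac23,1],\\ (1-2b)x^2+2bx, & x\in(\frac13,\frac23).\end{cases}$$ Let $f_b^n$ denote the $n$-fold composition of $f_b$ with itself. Then: 1. The set of fixed points of $f_b$ is $[0,\frac13]\cup[\frac23,1]$. 2. If $0\le b<\frac12$, then for every $x^{(0)}\in(\frac13,\frac23)$ there exist $n\in\mathbb N$ and $p\in[\frac19(1+4b),\frac13]$ such that $f_b^n(x^{(0)})=p$ and $f_b^{n+1}(x^{(0)})=f_b(p)=p$. 3. If $\frac12<b\le1$, then for every $x^{(0)}\in(\frac13,\frac23)$ there exist $n\in\mathbb N$ and $p\in[\frac23,\frac49(1+b)]$ such that $f_b^n(x^{(0)})=p$ and $f_b^{n+1}(x^{(0)})=f_b(p)=p$.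
   Context: This map is the reduction to $[0,1]$ of the quadratic stochastic operator $x'=x^2+2p(x)xy$, $y'=2(1-p(x))xy+y^2$ (with $y=1-x$), where $p(x)=a$ for $x\le\frac13$, $b$ for $\frac13<x<\frac23$, $c$ for $x\ge\frac23$, in the case $a=c=\frac12$. *)

theory Defs
  imports Complex_Main
begin

text \<open>The map f_b on [0,1] (defined on all reals; only its values on [0,1] matter).\<close>
definition fb :: "real \<Rightarrow> real \<Rightarrow> real" where
  "fb b x = (if x \<in> {0..1/3} \<union> {2/3..1} then x else (1 - 2*b) * x^2 + 2*b*x)"

end

theory Submission
  imports Defs
begin

lemma mid_val: "x \<in> {1/3<..<2/3} \<Longrightarrow> fb b x = (1 - 2*b) * x^2 + 2*b*x"
  unfolding fb_def by auto

lemma fix_val: "x \<in> {0..1/3} \<union> {2/3..1} \<Longrightarrow> fb b x = x"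
  unfolding fb_def by auto

lemma diff_eq: "(1 - 2*(b::real)) * x^2 + 2*b*x - x = (1 - 2*b) * (x * (x - 1))"
  by (simp add: algebra_simps power2_eq_square)

lemma prod_bound: "(x::real) \<in> {1/3<..<2/3} \<Longrightarrow> x * (1 - x) \<ge> 2/9"
proof -
  assume "x \<in> {1/3<..<2/3}"
  then have "(x - 1/3) * (2/3 - x) \<ge> 0" by auto
  then show ?thesis by (simp add: algebra_simps power2_eq_square field_simps)
qed

lemma low_case:
  fixes b :: real
  assumes b0: "0 \<le> b" and bl: "b < 1/2"
  shows "\<forall>x. x \<in> {1/3<..<2/3} \<and> x \<le> 1/3 + real k * ((1 - 2*b) * (2/9)) \<longrightarrow>
     (\<exists>n::nat. \<exists>p \<in> {(1 + 4*b)/9..1/3}. (fb b ^^ n) x = p \<and> fb b p = p)"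
proof (induction k)
  case 0
  then show ?case by auto
next
  case (Suc k)
  show ?case
  proof (intro allI impI)
    fix x assume hx: "x \<in> {1/3<..<2/3} \<and> x \<le> 1/3 + real (Suc k) * ((1 - 2*b) * (2/9))"
    define y where "y = fb b x"
    have yv: "y = (1 - 2*b) * x^2 + 2*b*x" using hx mid_val y_def by auto
    have pb: "x * (1 - x) \<ge> 2/9" using hx prod_bound by auto
    have "y - x = - ((1 - 2*b) * (x * (1 - x)))" using yv diff_eq[of b x] by (simp add: algebra_simps)
    moreover have "(1 - 2*b) * (x * (1 - x)) \<ge> (1 - 2*b) * (2/9)"
      using pb bl by (intro mult_left_mono) auto
    ultimately have ydec: "y \<le> x - (1 - 2*b) * (2/9)" by linarith
    have "y - (1 + 4*b)/9 = (x - 1/3) * ((1 - 2*b) * (x + 1/3) + 2*b)"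
      unfolding yv power2_eq_square by (simp add: field_simps)
    moreover have "(x - 1/3) * ((1 - 2*b) * (x + 1/3) + 2*b) > 0"
      using hx bl b0 by (intro mult_pos_pos add_pos_nonneg mult_pos_pos) auto
    ultimately have ylo: "y > (1 + 4*b)/9" by linarith
    have ypos: "(1 - 2*b) * (2/9) > 0" using bl by auto
    show "\<exists>n::nat. \<exists>p \<in> {(1 + 4*b)/9..1/3}. (fb b ^^ n) x = p \<and> fb b p = p"
    proof (cases "y \<le> 1/3")
      case True
      have "fb b y = y" using True ylo b0 by (intro fix_val) auto
      moreover have "(fb b ^^ 1) x = y" using y_def by simp
      ultimately show ?thesis using True ylo by (intro exI[of _ 1] bexI[of _ y]) auto
    next
      case False
      have "y \<in> {1/3<..<2/3} \<and> y \<le> 1/3 + real k * ((1 - 2*b) * (2/9))"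
      proof -
        have e: "real (Suc k) * ((1 - 2*b) * (2/9)) = real k * ((1 - 2*b) * (2/9)) + (1 - 2*b) * (2/9)"
          by (simp only: of_nat_Suc distrib_right mult_1_left)
        have "x < 2/3" using hx by auto
        then have "y < 2/3" using ydec ypos by linarith
        moreover have "y \<le> 1/3 + real k * ((1 - 2*b) * (2/9))" using hx ydec e by linarith
        ultimately show ?thesis using False by auto
      qed
      then obtain n p where p: "p \<in> {(1 + 4*b)/9..1/3}" "(fb b ^^ n) y = p" "fb b p = p"
        using Suc.IH by blast
      have "(fb b ^^ Suc n) x = p" using p(2) y_def by (simp add: funpow_Suc_right del: funpow.simps)
      then show ?thesis using p by blast
    qed
  qed
qed

lemma high_case:
  fixes b :: real
  assumes b1: "b \<le> 1" and bl: "1/2 < b"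
  shows "\<forall>x. x \<in> {1/3<..<2/3} \<and> x \<ge> 2/3 - real k * ((2*b - 1) * (2/9)) \<longrightarrow>
     (\<exists>n::nat. \<exists>p \<in> {2/3..4/9*(1 + b)}. (fb b ^^ n) x = p \<and> fb b p = p)"
proof (induction k)
  case 0
  then show ?case by auto
next
  case (Suc k)
  show ?case
  proof (intro allI impI)
    fix x assume hx: "x \<in> {1/3<..<2/3} \<and> x \<ge> 2/3 - real (Suc k) * ((2*b - 1) * (2/9))"
    define y where "y = fb b x"
    have yv: "y = (1 - 2*b) * x^2 + 2*b*x" using hx mid_val y_def by auto
    have pb: "x * (1 - x) \<ge> 2/9" using hx prod_bound by auto
    have "y - x = (2*b - 1) * (x * (1 - x))" using yv diff_eq[of b x] by (simp add: algebra_simps)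
    moreover have "(2*b - 1) * (x * (1 - x)) \<ge> (2*b - 1) * (2/9)"
      using pb bl by (intro mult_left_mono) auto
    ultimately have yinc: "y \<ge> x + (2*b - 1) * (2/9)" by linarith
    have "4/9*(1 + b) - y = (2/3 - x) * ((1 - 2*b) * (x + 2/3) + 2*b)"
      unfolding yv power2_eq_square by (simp add: field_simps)
    moreover have "(1 - 2*b) * (x + 2/3) + 2*b > 0"
    proof -
      have "(2*b - 1) * (x + 2/3) < (2*b - 1) * (4/3)" using hx bl by (intro mult_strict_left_mono) auto
      moreover have "(1 - 2*b) * (x + 2/3) = - ((2*b - 1) * (x + 2/3))" by (simp add: field_simps)
      moreover have "(2*b - 1) * (4/3) = 8/3*b - 4/3" by simp
      ultimately show ?thesis using b1 by linarith
    qed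
    moreover have "2/3 - x > 0" using hx by auto
    ultimately have yhi: "y < 4/9*(1 + b)" by (metis diff_gt_0_iff_gt mult_pos_pos)
    have ypos: "(2*b - 1) * (2/9) > 0" using bl by auto
    show "\<exists>n::nat. \<exists>p \<in> {2/3..4/9*(1 + b)}. (fb b ^^ n) x = p \<and> fb b p = p"
    proof (cases "y \<ge> 2/3")
      case True
      have "fb b y = y" using True yhi b1 by (intro fix_val) auto
      moreover have "(fb b ^^ 1) x = y" using y_def by simp
      ultimately show ?thesis using True yhi by (intro exI[of _ 1] bexI[of _ y]) auto
    next
      case False
      have "y \<in> {1/3<..<2/3} \<and> y \<ge> 2/3 - real k * ((2*b - 1) * (2/9))"
      proof -
        have e: "real (Suc k) * ((2*b - 1) * (2/9)) = real k * ((2*b - 1) * (2/9)) + (2*b - 1) * (2/9)"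
          by (simp only: of_nat_Suc distrib_right mult_1_left)
        have "x > 1/3" using hx by auto
        then have "y > 1/3" using yinc ypos by linarith
        moreover have "y \<ge> 2/3 - real k * ((2*b - 1) * (2/9))" using hx yinc e by linarith
        ultimately show ?thesis using False by auto
      qed
      then obtain n p where p: "p \<in> {2/3..4/9*(1 + b)}" "(fb b ^^ n) y = p" "fb b p = p"
        using Suc.IH by blast
      have "(fb b ^^ Suc n) x = p" using p(2) y_def by (simp add: funpow_Suc_right del: funpow.simps)
      then show ?thesis using p by blast
    qed
  qed
qed

theorem theorem2p2:
  fixes b :: real
  assumes "0 \<le> b" and "b \<le> 1" and "b \<noteq> 1/2"
  shows "{x \<in> {0..1}. fb b x = x} = {0..1/3} \<union> {2/3..1}
    \<and> (b < 1/2 \<longrightarrow> (\<forall>x0 \<in> {1/3<..<2/3}. \<exists>n::nat. \<exists>p \<in> {(1 + 4*b)/9..1/3}.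
           (fb b ^^ n) x0 = p \<and> (fb b ^^ Suc n) x0 = fb b p \<and> fb b p = p))
    \<and> (1/2 < b \<longrightarrow> (\<forall>x0 \<in> {1/3<..<2/3}. \<exists>n::nat. \<exists>p \<in> {2/3..4/9*(1 + b)}.
           (fb b ^^ n) x0 = p \<and> (fb b ^^ Suc n) x0 = fb b p \<and> fb b p = p))"
proof (intro conjI impI ballI)
  show "{x \<in> {0..1}. fb b x = x} = {0..1/3} \<union> {2/3..1}"
  proof
    show "{0..1/3} \<union> {2/3..1} \<subseteq> {x \<in> {0..1}. fb b x = x}" using fix_val by auto
    show "{x \<in> {0..1}. fb b x = x} \<subseteq> {0..1/3} \<union> {2/3..1}"
    proof
      fix x assume hx: "x \<in> {x \<in> {0..1}. fb b x = x}"
      show "x \<in> {0..1/3} \<union> {2/3..1}"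
      proof (rule ccontr)
        assume "x \<notin> {0..1/3} \<union> {2/3..1}"
        then have xm: "x \<in> {1/3<..<2/3}" using hx by auto
        then have "(1 - 2*b) * x^2 + 2*b*x - x = 0" using hx mid_val[OF xm] by auto
        then have "(1 - 2*b) * (x * (x - 1)) = 0" using diff_eq by metis
        moreover have "1 - 2*b \<noteq> 0" using assms by auto
        moreover have "x * (x - 1) \<noteq> 0" using xm by auto
        ultimately show False by simp
      qed
    qed
  qed
next
  fix x0 :: real assume bl: "b < 1/2" and hx: "x0 \<in> {1/3<..<2/3}"
  have d: "(1 - 2*b) * (2/9) > 0" using bl by auto
  obtain k :: nat where "(x0 - 1/3) / ((1 - 2*b) * (2/9)) \<le> real k" using real_arch_simple by blast
  then have "x0 - 1/3 \<le> real k * ((1 - 2*b) * (2/9))" using d by (simp add: divide_le_eq)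
  then obtain n p where p: "p \<in> {(1 + 4*b)/9..1/3}" "(fb b ^^ n) x0 = p" "fb b p = p"
    using low_case[OF assms(1) bl, of k] hx by force
  then show "\<exists>n::nat. \<exists>p \<in> {(1 + 4*b)/9..1/3}.
           (fb b ^^ n) x0 = p \<and> (fb b ^^ Suc n) x0 = fb b p \<and> fb b p = p" by auto
next
  fix x0 :: real assume bl: "1/2 < b" and hx: "x0 \<in> {1/3<..<2/3}"
  have d: "(2*b - 1) * (2/9) > 0" using bl by auto
  obtain k :: nat where "(2/3 - x0) / ((2*b - 1) * (2/9)) \<le> real k" using real_arch_simple by blast
  then have "2/3 - x0 \<le> real k * ((2*b - 1) * (2/9))" using d by (simp add: divide_le_eq)
  then obtain n p where p: "p \<in> {2/3..4/9*(1 + b)}" "(fb b ^^ n) x0 = p" "fb b p = p"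
    using high_case[OF assms(2) bl, of k] hx by force
  then show "\<exists>n::nat. \<exists>p \<in> {2/3..4/9*(1 + b)}.
           (fb b ^^ n) x0 = p \<and> (fb b ^^ Suc n) x0 = fb b p \<and> fb b p = p" by auto
qed

end
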